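(* If $\Delta\subseteq\mathbb{R}^d$ is a Delzant polytope, then $\Upsilon(\Delta)=\mathrm{width}(\Delta)$.
   Context: A Delzant polytope is a full-dimensional polytope $\Delta\subseteq\mathbb{R}^d$ (vertices need not be lattice points) whose normal fan consists of unimodular cones, i.e. at each vertex the primitive inner normals of the $d$ incident facets form a basis of $(\mathbb{Z}^d)^*$. Write the facets as $\{x\in\Delta:\langle u_k,x\rangle=-\phi_k\}$, $k=1,\dots,m$, with $u_k\in(\mathbb{Z}^d)^*$ primitive inner facet normals and $\phi_k\in\mathbb{R}$, so $\Delta=\{x:\langle u_k,x\rangle\ge-\phi_k\ \forall k\}$. $\Upsilon(\Delta)$ is the minimum of all positive values $\sum_{k=1}^m a_k\phi_k$ where $a_k$ are nonnegative integers with $\sum_{k=1}^m a_ku_k=0$. $\mathrm{width}(\Delta)=\min_{u\in(\mathbb{Z}^d)^*\setminus\{0\}}\max_{x,y\in\Delta}|u(x)-u(y)|$. *)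

theory Defs
  imports "HOL-Analysis.Analysis"
begin

text \<open>Vectors in R^d are \<open>real^'n\<close>; the dual lattice (Z^d)^* is identified with the
integer vectors of \<open>real^'n\<close>, paired with R^d via the standard inner product.\<close>

definition integral_vec :: "real^'n \<Rightarrow> bool" where
  "integral_vec u \<longleftrightarrow> (\<forall>i. u $ i \<in> \<int>)"

definition primitive_vec :: "real^'n \<Rightarrow> bool" where
  "primitive_vec u \<longleftrightarrow> integral_vec u \<and> u \<noteq> 0 \<and>
     (\<forall>(c::int) w. integral_vec w \<and> u = of_int c *\<^sub>R w \<longrightarrow> \<bar>c\<bar> = 1)"

definition lattice_basis :: "(nat \<Rightarrow> real^'n) \<Rightarrow> nat set \<Rightarrow> bool" where
  "lattice_basis u I \<longleftrightarrow> finite I \<and> card I = CARD('n) \<and> inj_on u I \<and>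
     (\<forall>k\<in>I. integral_vec (u k)) \<and> independent (u ` I) \<and>
     (\<forall>z. integral_vec z \<longrightarrow> (\<exists>c::nat \<Rightarrow> int. z = (\<Sum>k\<in>I. of_int (c k) *\<^sub>R u k)))"

definition facet_presentation ::
  "(real^'n) set \<Rightarrow> nat \<Rightarrow> (nat \<Rightarrow> real^'n) \<Rightarrow> (nat \<Rightarrow> real) \<Rightarrow> bool" where
  "facet_presentation \<Delta> m u \<phi> \<longleftrightarrow>
     (\<forall>k<m. primitive_vec (u k)) \<and>
     \<Delta> = {x. \<forall>k<m. inner (u k) x \<ge> - \<phi> k} \<and>
     (\<forall>k<m. {x\<in>\<Delta>. inner (u k) x = - \<phi> k} facet_of \<Delta>) \<and>
     inj_on (\<lambda>k. {x\<in>\<Delta>. inner (u k) x = - \<phi> k}) {..<m} \<and>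
     (\<forall>F. F facet_of \<Delta> \<longrightarrow> (\<exists>k<m. F = {x\<in>\<Delta>. inner (u k) x = - \<phi> k}))"

definition delzant_polytope :: "(real^'n) set \<Rightarrow> bool" where
  "delzant_polytope \<Delta> \<longleftrightarrow> polytope \<Delta> \<and> interior \<Delta> \<noteq> {} \<and>
     (\<exists>m u \<phi>. facet_presentation \<Delta> m u \<phi> \<and>
        (\<forall>v. v extreme_point_of \<Delta> \<longrightarrow>
              lattice_basis u {k. k < m \<and> inner (u k) v = - \<phi> k}))"

definition Upsilon :: "nat \<Rightarrow> (nat \<Rightarrow> real^'n) \<Rightarrow> (nat \<Rightarrow> real) \<Rightarrow> real" where
  "Upsilon m u \<phi> = Inf {s. s > 0 \<and> (\<exists>a::nat \<Rightarrow> nat.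
      (\<Sum>k<m. of_nat (a k) *\<^sub>R u k) = 0 \<and> s = (\<Sum>k<m. of_nat (a k) * \<phi> k))}"

definition lattice_width :: "(real^'n) set \<Rightarrow> real" where
  "lattice_width \<Delta> = Inf ((\<lambda>u. Sup {\<bar>inner u x - inner u y\<bar> | x y. x \<in> \<Delta> \<and> y \<in> \<Delta>})
      ` {u. integral_vec u \<and> u \<noteq> 0})"

end

theory Submission imports Defs begin

lemma integral_vec_int:
  assumes "integral_vec a" obtains A where "\<And>j. a $ j = of_int (A j)"
proof -
  have "\<forall>j. \<exists>z::int. a $ j = of_int z" using assms unfolding integral_vec_def by (metis Ints_cases)
  then obtain A where "\<forall>j. a $ j = of_int (A j)" by metis
  then show ?thesis using that by blast
qed

lemma prim_scale:
  fixes a b :: "real^'n"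
  assumes pa: "primitive_vec a" and pb: "primitive_vec b" and ba: "b = l *\<^sub>R a" and l: "l > 0"
  shows "l = 1"
proof -
  have ia: "integral_vec a" and ib: "integral_vec b" and a0: "a \<noteq> 0"
    using pa pb unfolding primitive_vec_def by auto
  obtain A where A: "\<And>j. a $ j = of_int (A j)" using integral_vec_int[OF ia] by blast
  obtain B where B: "\<And>j. b $ j = of_int (B j)" using integral_vec_int[OF ib] by blast
  obtain i where ai: "a $ i \<noteq> 0" using a0 by (metis vec_eq_iff zero_index)
  have "l = b $ i / a $ i" using ba ai by simp
  then have "l \<in> \<rat>" using A B by simp
  then obtain P Q :: int where Q: "Q > 0" and cop: "coprime P Q" and lPQ: "l = of_int P / of_int Q"
    by (metis Rats_cases')
  have P: "P > 0" using l Q lPQ by (simp add: zero_less_divide_iff)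
  have eq: "Q * B j = P * A j" for j
  proof -
    have "b $ j = l * a $ j" using ba by simp
    then have "real_of_int Q * b $ j = of_int P * a $ j" using lPQ Q by (simp add: field_simps)
    then show ?thesis using A B by (metis of_int_eq_iff of_int_mult)
  qed
  have dQ: "Q dvd A j" for j
  proof -
    have "Q dvd P * A j" using eq[of j] by (metis dvd_triv_left)
    then show ?thesis using cop by (metis coprime_commute coprime_dvd_mult_right_iff)
  qed
  have dP: "P dvd B j" for j
  proof -
    have "P dvd Q * B j" using eq[of j] by (metis dvd_triv_left)
    then show ?thesis using cop by (metis coprime_dvd_mult_right_iff)
  qed
  define wa where "wa = (\<chi> j. real_of_int (A j div Q))"
  define wb where "wb = (\<chi> j. real_of_int (B j div P))"
  have "integral_vec wa" "integral_vec wb" unfolding integral_vec_def wa_def wb_def by auto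
  moreover have "a = of_int Q *\<^sub>R wa"
    unfolding wa_def using A dQ by (simp add: vec_eq_iff) (metis dvd_mult_div_cancel of_int_mult)
  moreover have "b = of_int P *\<^sub>R wb"
    unfolding wb_def using B dP by (simp add: vec_eq_iff) (metis dvd_mult_div_cancel of_int_mult)
  ultimately have "\<bar>Q\<bar> = 1" "\<bar>P\<bar> = 1" using pa pb unfolding primitive_vec_def by blast+
  then show ?thesis using lPQ P Q by simp
qed




lemma interior_strict:
  fixes a z :: "real^'n"
  assumes z: "z \<in> interior D" and h: "\<forall>x\<in>D. inner a x \<ge> -p" and a: "a \<noteq> 0"
  shows "inner a z > -p"
proof -
  obtain e where e: "e > 0" "ball z e \<subseteq> D" using z by (meson mem_interior)
  define t where "t = e / (2 * norm a)"
  have t: "t > 0" using e a by (simp add: t_def)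
  have "dist z (z - t *\<^sub>R a) = t * norm a" using t by (simp add: dist_norm)
  also have "\<dots> < e" using e a by (simp add: t_def)
  finally have "z - t *\<^sub>R a \<in> D" using e by auto
  then have "inner a (z - t *\<^sub>R a) \<ge> -p" using h by blast
  moreover have "inner a (z - t *\<^sub>R a) = inner a z - t * (norm a)^2"
    by (simp add: inner_diff_right power2_norm_eq_inner)
  moreover have "t * (norm a)^2 > 0" using t a by simp
  ultimately show ?thesis by linarith
qed

lemma facet_normal_unique:
  fixes D :: "(real^'n) set" and a b :: "real^'n"
  assumes int: "interior D \<noteq> {}" and ha: "\<forall>x\<in>D. inner a x \<ge> -p" and hb: "\<forall>x\<in>D. inner b x \<ge> -q"
    and F: "{x\<in>D. inner a x = -p} facet_of D"
    and eq: "{x\<in>D. inner a x = -p} = {x\<in>D. inner b x = -q}"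
    and pa: "primitive_vec a" and pb: "primitive_vec b"
  shows "a = b \<and> p = q"
proof -
  define F where "F = {x\<in>D. inner a x = -p}"
  have a0: "a \<noteq> 0" and b0: "b \<noteq> 0" using pa pb unfolding primitive_vec_def by auto
  have "affine hull D = UNIV" using int affine_hull_nonempty_interior by blast
  then have affD: "aff_dim D = int CARD('n)" by (metis aff_dim_UNIV aff_dim_affine_hull DIM_cart DIM_real mult.right_neutral)
  have Fne: "F \<noteq> {}" and affF: "aff_dim F = int CARD('n) - 1" using F affD unfolding F_def facet_of_def by auto
  have hyp: "affine hull F = {x. inner c x = r}" if c0: "c \<noteq> 0" and sub: "F \<subseteq> {x. inner c x = r}" for c :: "real^'n" and r
  proof (rule affine_dim_equal)
    show "affine (affine hull F)" by simp
    show "affine {x. inner c x = r}" by (simp add: affine_hyperplane)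
    show "affine hull F \<noteq> {}" using Fne by simp
    show "affine hull F \<subseteq> {x. inner c x = r}" using sub by (simp add: affine_hyperplane hull_minimal)
    show "aff_dim (affine hull F) = aff_dim {x. inner c x = r}" using c0 affF by simp
  qed
  have Ha: "affine hull F = {x. inner a x = -p}" by (rule hyp[OF a0]) (auto simp: F_def)
  have Hb: "affine hull F = {x. inner b x = -q}" by (rule hyp[OF b0]) (auto simp: F_def eq)
  obtain x0 where x0: "x0 \<in> F" using Fne by blast
  have xa: "inner a x0 = -p" and xb: "inner b x0 = -q" using x0 eq unfolding F_def by auto
  have orth: "inner b y = 0" if "inner a y = 0" for y
  proof -
    have "x0 + y \<in> {x. inner a x = -p}" using xa that by (simp add: inner_add_right)
    then have "inner b (x0 + y) = -q" using Ha Hb by auto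
    then show ?thesis using xb by (simp add: inner_add_right)
  qed
  define l where "l = inner b a / inner a a"
  define r where "r = b - l *\<^sub>R a"
  have aa: "inner a a > 0" using a0 by simp
  have ar: "inner a r = 0" unfolding r_def l_def using aa by (simp add: inner_diff_right inner_commute)
  have "inner b r = 0" using orth[OF ar] .
  then have "inner r r = 0" using ar unfolding r_def by (simp add: inner_diff_left)
  then have bl: "b = l *\<^sub>R a" unfolding r_def by simp
  have ql: "q = l * p" using xa xb bl by simp
  obtain z where z: "z \<in> interior D" using int by blast
  have "inner a z > -p" by (rule interior_strict[OF z ha a0])
  moreover have "inner b z > -q" by (rule interior_strict[OF z hb b0])
  ultimately have "l * (inner a z + p) > 0" "inner a z + p > 0" using bl ql by (auto simp: algebra_simps)
  then have "l > 0" by (simp add: zero_less_mult_iff)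
  have "l = 1" by (rule prim_scale[OF pa pb bl \<open>l > 0\<close>])
  then show ?thesis using bl ql by simp
qed


lemma integral_axis: "integral_vec (axis i (1::real))"
  unfolding integral_vec_def axis_def by auto

lemma cone_coeffs_nonneg:
  fixes u :: "nat \<Rightarrow> real^'n" and w v :: "real^'n"
  assumes fp: "D = {x. \<forall>k<m. inner (u k) x \<ge> - \<phi> k}" and lb: "lattice_basis u I"
    and I: "I = {k. k<m \<and> inner (u k) v = -\<phi> k}" and vD: "v \<in> D"
    and mn: "\<forall>x\<in>D. inner w v \<le> inner w x" and w: "w = (\<Sum>k\<in>I. of_int (c k) *\<^sub>R u k)" and j: "j \<in> I"
  shows "c j \<ge> 0"
proof -
  have finI: "finite I" and cI: "card I = CARD('n)" and injI: "inj_on u I"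
    and spanZ: "\<And>z. integral_vec z \<Longrightarrow> \<exists>c::nat \<Rightarrow> int. z = (\<Sum>k\<in>I. of_int (c k) *\<^sub>R u k)"
    using lb unfolding lattice_basis_def by auto
  have "dim (u ` (I - {j})) \<le> card (u ` (I - {j}))" using finI by (simp add: dim_le_card')
  also have "\<dots> \<le> card (I - {j})" using finI card_image_le by blast
  also have "\<dots> < CARD('n)" using cI j finI by (metis card_Diff1_less)
  finally have "dim (u ` (I - {j})) < DIM(real^'n)" by simp
  then obtain e where e0: "e \<noteq> 0" and eo: "\<And>y. y \<in> span (u ` (I - {j})) \<Longrightarrow> orthogonal e y"
    using orthogonal_to_subspace_exists[of "u ` (I - {j})"] by blast
  have eo': "inner (u k) e = 0" if "k \<in> I" "k \<noteq> j" for k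
    using eo[of "u k"] that by (simp add: span_base orthogonal_def inner_commute)
  have uje: "inner (u j) e \<noteq> 0"
  proof
    assume h: "inner (u j) e = 0"
    then have all: "inner (u k) e = 0" if "k \<in> I" for k using eo' that by (cases "k = j") auto
    have "e $ i = 0" for i
    proof -
      obtain c' where "axis i 1 = (\<Sum>k\<in>I. of_int (c' k) *\<^sub>R u k)" using spanZ[OF integral_axis] by blast
      then have "inner (axis i 1) e = (\<Sum>k\<in>I. of_int (c' k) * inner (u k) e)"
        by (simp add: inner_sum_left)
      also have "\<dots> = 0" using all by simp
      finally show ?thesis by (simp add: inner_axis')
    qed
    then show False using e0 by (simp add: vec_eq_iff)
  qed
  define e' where "e' = (if inner (u j) e > 0 then e else - e)"
  have ej: "inner (u j) e' > 0" using uje unfolding e'_def by auto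
  have ek: "inner (u k) e' = 0" if "k \<in> I" "k \<noteq> j" for k using eo'[OF that] unfolding e'_def by auto
  have ev: "\<forall>\<^sub>F t in at_right (0::real). \<forall>k\<in>{k. k < m \<and> k \<notin> I}. inner (u k) v + t * inner (u k) e' > - \<phi> k"
  proof (rule eventually_ball_finite)
    show "finite {k. k < m \<and> k \<notin> I}" by simp
    show "\<forall>k\<in>{k. k < m \<and> k \<notin> I}. \<forall>\<^sub>F t in at_right 0. - \<phi> k < inner (u k) v + t * inner (u k) e'"
    proof
      fix k assume k: "k \<in> {k. k < m \<and> k \<notin> I}"
      have "inner (u k) v \<ge> -\<phi> k" using vD fp k by auto
      then have gt: "inner (u k) v > -\<phi> k" using k I by auto
      have "((\<lambda>t. inner (u k) v + t * inner (u k) e') \<longlongrightarrow> inner (u k) v + 0 * inner (u k) e') (at_right 0)"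
        by (intro tendsto_intros)
      then show "\<forall>\<^sub>F t in at_right 0. - \<phi> k < inner (u k) v + t * inner (u k) e'"
        using gt by (simp add: order_tendstoD(1))
    qed
  qed
  have "\<forall>\<^sub>F t in at_right (0::real). t > 0 \<and> (\<forall>k\<in>{k. k < m \<and> k \<notin> I}. inner (u k) v + t * inner (u k) e' > - \<phi> k)"
    using ev eventually_at_right_less eventually_conj by blast
  then obtain t where t: "t > 0" and tk: "\<forall>k\<in>{k. k < m \<and> k \<notin> I}. inner (u k) v + t * inner (u k) e' > - \<phi> k"
    using eventually_happens' trivial_limit_at_right_real by blast
  have "v + t *\<^sub>R e' \<in> D"
    unfolding fp
  proof (intro CollectI allI impI)
    fix k assume k: "k < m"
    show "inner (u k) (v + t *\<^sub>R e') \<ge> - \<phi> k"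
    proof (cases "k \<in> I")
      case True
      then have vk: "inner (u k) v = - \<phi> k" using I by auto
      show ?thesis
      proof (cases "k = j")
        case True then show ?thesis using vk ej t by (simp add: inner_add_right)
      next
        case False then show ?thesis using vk ek[OF \<open>k \<in> I\<close>] by (simp add: inner_add_right)
      qed
    next
      case False then show ?thesis using tk k by (auto simp: inner_add_right)
    qed
  qed
  then have "inner w v \<le> inner w (v + t *\<^sub>R e')" using mn by blast
  then have "0 \<le> t * inner w e'" by (simp add: inner_add_right)
  then have we: "inner w e' \<ge> 0" using t by (simp add: zero_le_mult_iff)
  have "inner w e' = (\<Sum>k\<in>I. of_int (c k) * inner (u k) e')" using w by (simp add: inner_sum_left)
  also have "\<dots> = of_int (c j) * inner (u j) e'"
    using finI j ek by (subst sum.remove[of I j]) auto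
  finally have "of_int (c j) * inner (u j) e' \<ge> 0" using we by simp
  then show ?thesis using ej by (simp add: zero_le_mult_iff)
qed

lemma extreme_min:
  fixes D :: "(real^'n) set" and w :: "real^'n"
  assumes "polytope D" "D \<noteq> {}"
  shows "\<exists>v. v extreme_point_of D \<and> (\<forall>x\<in>D. inner w v \<le> inner w x)"
proof -
  obtain T where T: "finite T" "D = convex hull T" using assms unfolding polytope_def by blast
  define E where "E = {x. x extreme_point_of D}"
  have DE: "D = convex hull E" using T Krein_Milman_polytope unfolding E_def by blast
  have "E \<subseteq> T" unfolding E_def T using extreme_point_of_convex_hull by blast
  then have fE: "finite E" using T finite_subset by blast
  have nE: "E \<noteq> {}" using DE assms by auto
  obtain v where v: "v \<in> E" "\<forall>y\<in>E. inner w v \<le> inner w y"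
    using arg_min_if_finite[OF fE nE, of "\<lambda>y. inner w y"] by (metis not_less)
  have "E \<subseteq> {x. inner w v \<le> inner w x}" using v by auto
  moreover have "convex {x. inner w v \<le> inner w x}" by (simp add: convex_halfspace_ge)
  ultimately have "convex hull E \<subseteq> {x. inner w v \<le> inner w x}" by (simp add: hull_minimal)
  then show ?thesis using v DE unfolding E_def by auto
qed


lemma fpD:
  assumes "facet_presentation D m u \<phi>"
  shows fp_D: "D = {x. \<forall>k<m. inner (u k) x \<ge> - \<phi> k}"
    and fp_prim: "\<And>k. k < m \<Longrightarrow> primitive_vec (u k)"
    and fp_facet: "\<And>k. k < m \<Longrightarrow> {x\<in>D. inner (u k) x = - \<phi> k} facet_of D"
    and fp_all: "\<And>F. F facet_of D \<Longrightarrow> \<exists>k<m. F = {x\<in>D. inner (u k) x = - \<phi> k}"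
  using assms unfolding facet_presentation_def by blast+

lemma delzantD:
  assumes "delzant_polytope D"
  shows "polytope D" "interior D \<noteq> {}"
    "\<exists>m u \<phi>. facet_presentation D m u \<phi> \<and>
        (\<forall>v. v extreme_point_of D \<longrightarrow> lattice_basis u {k. k < m \<and> inner (u k) v = - \<phi> k})"
  using assms unfolding delzant_polytope_def by blast+

lemma lbD:
  assumes "lattice_basis u I"
  shows "finite I" "card I = CARD('n)" "inj_on u I" "\<And>z. integral_vec z \<Longrightarrow> (\<exists>c::nat \<Rightarrow> int. z = (\<Sum>k\<in>I. of_int (c k) *\<^sub>R (u k :: real^'n)))"
  using assms unfolding lattice_basis_def by blast+

lemma cone_at_vertex:
  fixes D :: "(real^'n) set" and u :: "nat \<Rightarrow> real^'n" and w v :: "real^'n"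
  assumes dz: "delzant_polytope D" and fp: "facet_presentation D m u \<phi>" and wi: "integral_vec w"
    and v: "v extreme_point_of D" and mn: "\<forall>x\<in>D. inner w v \<le> inner w x"
  shows "\<exists>a::nat\<Rightarrow>nat. (\<Sum>k<m. of_nat (a k) *\<^sub>R u k) = w \<and> (\<Sum>k<m. of_nat (a k) * \<phi> k) = - inner w v"
proof -
  have int: "interior D \<noteq> {}" using delzantD[OF dz] by blast
  obtain m' u' \<phi>' where fp': "facet_presentation D m' u' \<phi>'"
    and lbv: "lattice_basis u' {k. k < m' \<and> inner (u' k) v = - \<phi>' k}"
    using delzantD(3)[OF dz] v by blast
  define I where "I = {k. k < m' \<and> inner (u' k) v = - \<phi>' k}"
  have lb: "lattice_basis u' I" using lbv unfolding I_def .
  have finI: "finite I" using lbD(1)[OF lb] .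
  obtain c where wc: "w = (\<Sum>k\<in>I. of_int (c k) *\<^sub>R u' k)"
    using lbD(4)[OF lb wi] by blast
  have vD: "v \<in> D" using v unfolding extreme_point_of_def by blast
  have D': "D = {x. \<forall>k<m'. inner (u' k) x \<ge> - \<phi>' k}" by (rule fp_D[OF fp'])
  have D0: "D = {x. \<forall>k<m. inner (u k) x \<ge> - \<phi> k}" by (rule fp_D[OF fp])
  have cpos: "c k \<ge> 0" if "k \<in> I" for k
    by (rule cone_coeffs_nonneg[OF D' lb I_def vD mn wc that])
  have match: "\<exists>j<m. u j = u' k \<and> \<phi> j = \<phi>' k" if k: "k \<in> I" for k
  proof -
    have km: "k < m'" using k I_def by auto
    have Fk: "{x\<in>D. inner (u' k) x = - \<phi>' k} facet_of D" using fp_facet[OF fp' km] .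
    then obtain j where j: "j < m" "{x\<in>D. inner (u' k) x = - \<phi>' k} = {x\<in>D. inner (u j) x = - \<phi> j}"
      using fp_all[OF fp Fk] by blast
    have "u' k = u j \<and> \<phi>' k = \<phi> j"
    proof (rule facet_normal_unique[OF int _ _ Fk j(2)])
      show "\<forall>x\<in>D. inner (u' k) x \<ge> - \<phi>' k" using D' km by auto
      show "\<forall>x\<in>D. inner (u j) x \<ge> - \<phi> j" using D0 j by auto
      show "primitive_vec (u' k)" using fp_prim[OF fp' km] .
      show "primitive_vec (u j)" using fp_prim[OF fp j(1)] .
    qed
    then show ?thesis using j by auto
  qed
  have "\<forall>k\<in>I. \<exists>j. j < m \<and> u j = u' k \<and> \<phi> j = \<phi>' k" using match by blast
  then obtain \<sigma> where \<sigma>0: "\<forall>k\<in>I. \<sigma> k < m \<and> u (\<sigma> k) = u' k \<and> \<phi> (\<sigma> k) = \<phi>' k"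
    by (rule bchoice[THEN exE]) blast
  have \<sigma>: "\<And>k. k \<in> I \<Longrightarrow> \<sigma> k < m \<and> u (\<sigma> k) = u' k \<and> \<phi> (\<sigma> k) = \<phi>' k" using \<sigma>0 by blast
  define a where "a j = nat (\<Sum>k\<in>{k. k \<in> I \<and> \<sigma> k = j}. c k)" for j
  have aj: "real (a j) = (\<Sum>k\<in>{k. k \<in> I \<and> \<sigma> k = j}. real_of_int (c k))" for j
  proof -
    have "(\<Sum>k\<in>{k. k \<in> I \<and> \<sigma> k = j}. c k) \<ge> 0" using cpos by (intro sum_nonneg) auto
    then show ?thesis unfolding a_def by simp
  qed
  have img: "\<sigma> ` I \<subseteq> {..<m}" using \<sigma> by auto
  have "(\<Sum>j<m. of_nat (a j) *\<^sub>R u j) = (\<Sum>j<m. \<Sum>k\<in>{k. k \<in> I \<and> \<sigma> k = j}. of_int (c k) *\<^sub>R u' k)"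
  proof (rule sum.cong[OF refl])
    fix j assume "j \<in> {..<m}"
    have "of_nat (a j) *\<^sub>R u j = (\<Sum>k\<in>{k. k \<in> I \<and> \<sigma> k = j}. of_int (c k) *\<^sub>R u j)"
      using aj by (simp add: scaleR_sum_left)
    also have "\<dots> = (\<Sum>k\<in>{k. k \<in> I \<and> \<sigma> k = j}. of_int (c k) *\<^sub>R u' k)"
      by (rule sum.cong) (use \<sigma> in auto)
    finally show "of_nat (a j) *\<^sub>R u j = (\<Sum>k\<in>{k. k \<in> I \<and> \<sigma> k = j}. of_int (c k) *\<^sub>R u' k)" .
  qed
  also have "\<dots> = (\<Sum>k\<in>I. of_int (c k) *\<^sub>R u' k)"
    by (rule sum.group[OF finI _ img]) simp
  finally have s1: "(\<Sum>j<m. of_nat (a j) *\<^sub>R u j) = w" using wc by simp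
  have "(\<Sum>j<m. of_nat (a j) * \<phi> j) = (\<Sum>j<m. \<Sum>k\<in>{k. k \<in> I \<and> \<sigma> k = j}. of_int (c k) * \<phi>' k)"
  proof (rule sum.cong[OF refl])
    fix j assume "j \<in> {..<m}"
    have "of_nat (a j) * \<phi> j = (\<Sum>k\<in>{k. k \<in> I \<and> \<sigma> k = j}. of_int (c k) * \<phi> j)"
      using aj by (simp add: sum_distrib_right)
    also have "\<dots> = (\<Sum>k\<in>{k. k \<in> I \<and> \<sigma> k = j}. of_int (c k) * \<phi>' k)"
      by (rule sum.cong) (use \<sigma> in auto)
    finally show "of_nat (a j) * \<phi> j = (\<Sum>k\<in>{k. k \<in> I \<and> \<sigma> k = j}. of_int (c k) * \<phi>' k)" .
  qed
  also have "\<dots> = (\<Sum>k\<in>I. of_int (c k) * \<phi>' k)"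
    by (rule sum.group[OF finI _ img]) simp
  also have "\<dots> = (\<Sum>k\<in>I. - (of_int (c k) * inner (u' k) v))"
    by (rule sum.cong) (auto simp: I_def)
  also have "\<dots> = - inner w v" using wc by (simp add: inner_sum_left sum_negf)
  finally show ?thesis using s1 by blast
qed


lemma width_val:
  fixes D :: "(real^'n) set" and w :: "real^'n"
  assumes v: "v \<in> D" "\<forall>x\<in>D. inner w v \<le> inner w x" and v': "v' \<in> D" "\<forall>x\<in>D. inner w x \<le> inner w v'"
  shows "Sup {\<bar>inner w x - inner w y\<bar> | x y. x \<in> D \<and> y \<in> D} = inner w v' - inner w v"
proof (rule cSup_eq_maximum)
  have "inner w v \<le> inner w v'" using v v' by blast
  then have "\<bar>inner w v' - inner w v\<bar> = inner w v' - inner w v" by simp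
  then show "inner w v' - inner w v \<in> {\<bar>inner w x - inner w y\<bar> | x y. x \<in> D \<and> y \<in> D}"
    using v v' by (metis (mono_tags, lifting) mem_Collect_eq)
  fix z assume "z \<in> {\<bar>inner w x - inner w y\<bar> | x y. x \<in> D \<and> y \<in> D}"
  then obtain x y where xy: "z = \<bar>inner w x - inner w y\<bar>" "x \<in> D" "y \<in> D" by blast
  have "inner w v \<le> inner w x" "inner w v \<le> inner w y" "inner w x \<le> inner w v'" "inner w y \<le> inner w v'"
    using v v' xy by auto
  then show "z \<le> inner w v' - inner w v" using xy(1) by linarith
qed

lemma width_pos:
  fixes D :: "(real^'n) set" and w :: "real^'n"
  assumes int: "interior D \<noteq> {}" and w0: "w \<noteq> 0"
    and v: "\<forall>x\<in>D. inner w v \<le> inner w x" and v': "\<forall>x\<in>D. inner w x \<le> inner w v'"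
  shows "inner w v' - inner w v > 0"
proof -
  obtain z where z: "z \<in> interior D" using int by blast
  obtain e where e: "e > 0" "ball z e \<subseteq> D" using z by (meson mem_interior)
  define t where "t = e / (2 * norm w)"
  have t: "t > 0" using e w0 by (simp add: t_def)
  have d: "t * norm w < e" using e w0 by (simp add: t_def)
  have "z + t *\<^sub>R w \<in> D" "z - t *\<^sub>R w \<in> D" using e d t by (auto simp: dist_norm subset_iff)
  then have "inner w (z - t *\<^sub>R w) \<ge> inner w v" "inner w (z + t *\<^sub>R w) \<le> inner w v'" using v v' by auto
  moreover have "inner w (z + t *\<^sub>R w) - inner w (z - t *\<^sub>R w) = 2 * t * inner w w"
    by (simp add: inner_add_right inner_diff_right)
  moreover have "t * inner w w > 0" using t w0 by simp
  ultimately show ?thesis by linarith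
qed

theorem proposition3p7:
  fixes \<Delta> :: "(real^'n) set" and m :: nat and u :: "nat \<Rightarrow> real^'n" and \<phi> :: "nat \<Rightarrow> real"
  assumes "delzant_polytope \<Delta>"
    and "facet_presentation \<Delta> m u \<phi>"
  shows "Upsilon m u \<phi> = lattice_width \<Delta>"
proof -
  note dz = assms(1) and fp = assms(2)
  have pol: "polytope \<Delta>" and int: "interior \<Delta> \<noteq> {}" using delzantD[OF dz] by auto
  have ne: "\<Delta> \<noteq> {}" using int interior_subset by blast
  define S where "S = {s. s > 0 \<and> (\<exists>a::nat \<Rightarrow> nat.
      (\<Sum>k<m. of_nat (a k) *\<^sub>R u k) = 0 \<and> s = (\<Sum>k<m. of_nat (a k) * \<phi> k))}"
  define wd where "wd w = Sup {\<bar>inner w x - inner w y\<bar> | x y. x \<in> \<Delta> \<and> y \<in> \<Delta>}" for w :: "real^'n"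
  define W where "W = wd ` {w. integral_vec w \<and> w \<noteq> 0}"
  have U: "Upsilon m u \<phi> = Inf S" unfolding Upsilon_def S_def ..
  have LW: "lattice_width \<Delta> = Inf W" unfolding lattice_width_def W_def wd_def ..
  have WS: "wd w \<in> S \<and> wd w > 0" if wi: "integral_vec w" and w0: "w \<noteq> 0" for w
  proof -
    obtain v where v: "v extreme_point_of \<Delta>" "\<forall>x\<in>\<Delta>. inner w v \<le> inner w x"
      using extreme_min[OF pol ne] by blast
    obtain v' where v': "v' extreme_point_of \<Delta>" "\<forall>x\<in>\<Delta>. inner (-w) v' \<le> inner (-w) x"
      using extreme_min[OF pol ne] by blast
    have v'': "\<forall>x\<in>\<Delta>. inner w x \<le> inner w v'" using v'(2) by simp
    have vD: "v \<in> \<Delta>" "v' \<in> \<Delta>" using v v' unfolding extreme_point_of_def by auto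
    have wdv: "wd w = inner w v' - inner w v" unfolding wd_def by (rule width_val[OF vD(1) v(2) vD(2) v''])
    have pos: "wd w > 0" unfolding wdv by (rule width_pos[OF int w0 v(2) v''])
    have wi': "integral_vec (-w)" using wi unfolding integral_vec_def by simp
    obtain a1 :: "nat \<Rightarrow> nat" where a1: "(\<Sum>k<m. of_nat (a1 k) *\<^sub>R u k) = w" "(\<Sum>k<m. of_nat (a1 k) * \<phi> k) = - inner w v"
      using cone_at_vertex[OF dz fp wi v(1) v(2)] by blast
    obtain a2 :: "nat \<Rightarrow> nat" where a2: "(\<Sum>k<m. of_nat (a2 k) *\<^sub>R u k) = -w" "(\<Sum>k<m. of_nat (a2 k) * \<phi> k) = - inner (-w) v'"
      using cone_at_vertex[OF dz fp wi' v'(1) v'(2)] by blast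
    define a where "a k = a1 k + a2 k" for k
    have "(\<Sum>k<m. of_nat (a k) *\<^sub>R u k) = 0"
      using a1 a2 by (simp add: a_def scaleR_add_left sum.distrib)
    moreover have "wd w = (\<Sum>k<m. of_nat (a k) * \<phi> k)"
      using a1 a2 wdv by (simp add: a_def distrib_right sum.distrib)
    ultimately show ?thesis using pos unfolding S_def by blast
  qed
  have SW: "\<exists>w. integral_vec w \<and> w \<noteq> 0 \<and> wd w \<le> s" if s: "s \<in> S" for s
  proof -
    obtain a :: "nat \<Rightarrow> nat" where s0: "s > 0" and au: "(\<Sum>k<m. of_nat (a k) *\<^sub>R u k) = 0"
      and sa: "s = (\<Sum>k<m. of_nat (a k) * \<phi> k)" using s unfolding S_def by blast
    obtain k where k: "k < m" "a k \<noteq> 0"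
    proof (rule ccontr)
      assume "\<not> thesis"
      then have "\<forall>k<m. a k = 0" using that by blast
      then have "s = 0" using sa by simp
      then show False using s0 by simp
    qed
    have D: "\<Delta> = {x. \<forall>k<m. inner (u k) x \<ge> - \<phi> k}" by (rule fp_D[OF fp])
    have pk: "primitive_vec (u k)" by (rule fp_prim[OF fp k(1)])
    have up: "inner (u k) x + \<phi> k \<le> s" if x: "x \<in> \<Delta>" for x
    proof -
      have nn: "\<forall>j<m. inner (u j) x + \<phi> j \<ge> 0" using x D by auto
      have "(\<Sum>j<m. of_nat (a j) * (inner (u j) x + \<phi> j)) = inner (\<Sum>j<m. of_nat (a j) *\<^sub>R u j) x + (\<Sum>j<m. of_nat (a j) * \<phi> j)"
        by (simp add: inner_sum_left distrib_left sum.distrib)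
      also have "\<dots> = s" using au sa by simp
      finally have sum: "(\<Sum>j<m. of_nat (a j) * (inner (u j) x + \<phi> j)) = s" .
      have "inner (u k) x + \<phi> k \<le> of_nat (a k) * (inner (u k) x + \<phi> k)"
      proof -
        have "real (a k) \<ge> 1" using k(2) by simp
        then show ?thesis using nn k(1) by (metis mult_le_cancel_right1 not_le)
      qed
      also have "\<dots> \<le> (\<Sum>j<m. of_nat (a j) * (inner (u j) x + \<phi> j))"
        by (rule member_le_sum) (use nn k in auto)
      finally show ?thesis using sum by simp
    qed
    have lo: "inner (u k) y + \<phi> k \<ge> 0" if "y \<in> \<Delta>" for y using that D k by auto
    have "wd (u k) \<le> s" unfolding wd_def
    proof (rule cSup_least)
      show "{\<bar>inner (u k) x - inner (u k) y\<bar> | x y. x \<in> \<Delta> \<and> y \<in> \<Delta>} \<noteq> {}" using ne by blast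
      fix z assume "z \<in> {\<bar>inner (u k) x - inner (u k) y\<bar> | x y. x \<in> \<Delta> \<and> y \<in> \<Delta>}"
      then obtain x y where z: "z = \<bar>inner (u k) x - inner (u k) y\<bar>" "x \<in> \<Delta>" "y \<in> \<Delta>" by blast
      show "z \<le> s" using up[OF z(2)] up[OF z(3)] lo[OF z(2)] lo[OF z(3)] z(1) by linarith
    qed
    then show ?thesis using pk unfolding primitive_vec_def by blast
  qed
  obtain i :: 'n where True by blast
  have ax: "integral_vec (axis i (1::real))" "axis i (1::real) \<noteq> 0" using integral_axis by (auto simp: axis_eq_0_iff)
  have Wne: "W \<noteq> {}" unfolding W_def using ax by blast
  have WsubS: "W \<subseteq> S" unfolding W_def using WS by blast
  have Sne: "S \<noteq> {}" using Wne WsubS by blast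
  have bS: "bdd_below S" unfolding S_def by (rule bdd_belowI[of _ 0]) auto
  have bW: "bdd_below W" unfolding W_def using WS by (intro bdd_belowI[of _ 0]) (auto intro: less_imp_le)
  have "Inf S \<le> Inf W"
    by (rule cInf_greatest[OF Wne]) (use WsubS bS in \<open>auto intro: cInf_lower\<close>)
  moreover have "Inf W \<le> Inf S"
  proof (rule cInf_greatest[OF Sne])
    fix s assume "s \<in> S"
    then obtain w where w: "integral_vec w" "w \<noteq> 0" "wd w \<le> s" using SW by blast
    have "wd w \<in> W" unfolding W_def using w by blast
    then have "Inf W \<le> wd w" using bW by (rule cInf_lower)
    then show "Inf W \<le> s" using w by linarith
  qed
  ultimately show ?thesis using U LW by linarith
qed

end
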